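(* Let $H$ carry a pre-Hopf-Frobenius algebra structure in a strict symmetric monoidal category $\mathcal{C}$, with green monoid $(\mu_g,\eta_g)$, green comonoid $(\delta_g,\varepsilon_g)$, red monoid $(\mu_r,\eta_r)$, red comonoid $(\delta_r,\varepsilon_r)$ and antipode $s$. Then $(H,\eta_r,\varepsilon_g)$ is an integral Hopf algebra (for the Hopf algebra $(H,\mu_g,\eta_g,\delta_r,\varepsilon_r,s)$) if and only if $$s=\big(\mathrm{id}_H\otimes(\varepsilon_r\circ\mu_r)\big)\circ\big((\delta_g\circ\eta_g)\otimes\mathrm{id}_H\big).$$
   Context: $\mathcal{C}$ is a strict symmetric monoidal category with unit object $I$ and symmetry $\sigma$. A Hopf algebra $(H,\mu,\eta,\Delta,\varepsilon,s)$: an object $H$ with an associative unital monoid $(\mu,\eta)$ and coassociative counital comonoid $(\Delta,\varepsilon)$ satisfying $\Delta\circ\mu=(\mu\otimes\mu)\circ(\mathrm{id}\otimes\sigma_{H,H}\otimes\mathrm{id})\circ(\Delta\otimes\Delta)$, $\Delta\circ\eta=\eta\otimes\eta$, $\varepsilon\circ\mu=\varepsilon\otimes\varepsilon$, $\varepsilon\circ\eta=\mathrm{id}_I$, and $s\colon H\to H$ with $\mu\circ(s\otimes\mathrm{id})\circ\Delta=\eta\circ\varepsilon=\mu\circ(\mathrm{id}\otimes s)\circ\Delta$. For such a Hopf algebra, a left cointegral is a point $\Lambda\colon I\to H$ with $\mu\circ(\Lambda\otimes\mathrm{id}_H)=\Lambda\circ\varepsilon$; a right integral is a copoint $\lambda\colon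 H\to I$ with $(\mathrm{id}_H\otimes\lambda)\circ\Delta=\eta\circ\lambda$; $(H,\Lambda,\lambda)$ is an integral Hopf algebra if $\Lambda$ is a left cointegral, $\lambda$ a right integral and $\lambda\circ\Lambda=\mathrm{id}_I$. A Frobenius algebra is a monoid $(m,u)$ and comonoid $(d,c)$ on the same object with $(\mathrm{id}\otimes m)\circ(d\otimes\mathrm{id})=d\circ m=(m\otimes\mathrm{id})\circ(\mathrm{id}\otimes d)$. A pre-Hopf-Frobenius algebra consists of an object $H$ with a green monoid $(\mu_g,\eta_g)$, green comonoid $(\delta_g,\varepsilon_g)$, red monoid $(\mu_r,\eta_r)$, red comonoid $(\delta_r,\varepsilon_r)$ and an endomorphism $s$ such that $(\mu_g,\eta_g,\delta_g,\varepsilon_g)$ and $(\mu_r,\eta_r,\delta_r,\varepsilon_r)$ are Frobenius algebras and $(\mu_g,\eta_g,\delta_r,\varepsilon_r,s)$ is a Hopf algebra. *)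

theory Defs
  imports Main
begin

text \<open>Morphisms
are the elements of type 'm (every element is a morphism), objects the elements
of type 'o.  Composition \<open>mcomp f g\<close> means f after g and is only constrained
when \<open>mdom f = mcod g\<close>.\<close>

record ('o, 'm) smcat =
  mdom  :: "'m \<Rightarrow> 'o"
  mcod  :: "'m \<Rightarrow> 'o"
  mcomp :: "'m \<Rightarrow> 'm \<Rightarrow> 'm"
  mid   :: "'o \<Rightarrow> 'm"
  otens :: "'o \<Rightarrow> 'o \<Rightarrow> 'o"
  mtens :: "'m \<Rightarrow> 'm \<Rightarrow> 'm"
  munit :: "'o"
  msym  :: "'o \<Rightarrow> 'o \<Rightarrow> 'm"

definition hom :: "('o, 'm) smcat \<Rightarrow> 'm \<Rightarrow> 'o \<Rightarrow> 'o \<Rightarrow> bool" where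
  "hom C f A B \<longleftrightarrow> mdom C f = A \<and> mcod C f = B"

definition strict_symmetric_monoidal_cat :: "('o, 'm) smcat \<Rightarrow> bool" where
  "strict_symmetric_monoidal_cat C \<longleftrightarrow>
     \<comment> \<open>category\<close>
     (\<forall>A. hom C (mid C A) A A) \<and>
     (\<forall>f g. mdom C f = mcod C g \<longrightarrow> hom C (mcomp C f g) (mdom C g) (mcod C f)) \<and>
     (\<forall>f g h. mdom C f = mcod C g \<and> mdom C g = mcod C h \<longrightarrow>
        mcomp C (mcomp C f g) h = mcomp C f (mcomp C g h)) \<and>
     (\<forall>f. mcomp C f (mid C (mdom C f)) = f \<and> mcomp C (mid C (mcod C f)) f = f) \<and>
     \<comment> \<open>tensor bifunctor\<close>
     (\<forall>f g. hom C (mtens C f g) (otens C (mdom C f) (mdom C g)) (otens C (mcod C f) (mcod C g))) \<and>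
     (\<forall>A B. mtens C (mid C A) (mid C B) = mid C (otens C A B)) \<and>
     (\<forall>f g h k. mdom C f = mcod C g \<and> mdom C h = mcod C k \<longrightarrow>
        mtens C (mcomp C f g) (mcomp C h k) = mcomp C (mtens C f h) (mtens C g k)) \<and>
     \<comment> \<open>strictness\<close>
     (\<forall>A B D. otens C (otens C A B) D = otens C A (otens C B D)) \<and>
     (\<forall>A. otens C (munit C) A = A \<and> otens C A (munit C) = A) \<and>
     (\<forall>f g h. mtens C (mtens C f g) h = mtens C f (mtens C g h)) \<and>
     (\<forall>f. mtens C (mid C (munit C)) f = f \<and> mtens C f (mid C (munit C)) = f) \<and>
     \<comment> \<open>symmetry\<close>
     (\<forall>A B. hom C (msym C A B) (otens C A B) (otens C B A)) \<and>
     (\<forall>f g. mcomp C (msym C (mcod C f) (mcod C g)) (mtens C f g)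
             = mcomp C (mtens C g f) (msym C (mdom C f) (mdom C g))) \<and>
     (\<forall>A B. mcomp C (msym C B A) (msym C A B) = mid C (otens C A B)) \<and>
     (\<forall>A B D. msym C A (otens C B D)
             = mcomp C (mtens C (mid C B) (msym C A D)) (mtens C (msym C A B) (mid C D)))"

definition is_monoid :: "('o, 'm) smcat \<Rightarrow> 'o \<Rightarrow> 'm \<Rightarrow> 'm \<Rightarrow> bool" where
  "is_monoid C H m u \<longleftrightarrow>
     hom C m (otens C H H) H \<and> hom C u (munit C) H \<and>
     mcomp C m (mtens C m (mid C H)) = mcomp C m (mtens C (mid C H) m) \<and>
     mcomp C m (mtens C u (mid C H)) = mid C H \<and>
     mcomp C m (mtens C (mid C H) u) = mid C H"

definition is_comonoid :: "('o, 'm) smcat \<Rightarrow> 'o \<Rightarrow> 'm \<Rightarrow> 'm \<Rightarrow> bool" where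
  "is_comonoid C H d c \<longleftrightarrow>
     hom C d H (otens C H H) \<and> hom C c H (munit C) \<and>
     mcomp C (mtens C d (mid C H)) d = mcomp C (mtens C (mid C H) d) d \<and>
     mcomp C (mtens C c (mid C H)) d = mid C H \<and>
     mcomp C (mtens C (mid C H) c) d = mid C H"

definition is_frobenius :: "('o, 'm) smcat \<Rightarrow> 'o \<Rightarrow> 'm \<Rightarrow> 'm \<Rightarrow> 'm \<Rightarrow> 'm \<Rightarrow> bool" where
  "is_frobenius C H m u d c \<longleftrightarrow>
     is_monoid C H m u \<and> is_comonoid C H d c \<and>
     mcomp C (mtens C (mid C H) m) (mtens C d (mid C H)) = mcomp C d m \<and>
     mcomp C d m = mcomp C (mtens C m (mid C H)) (mtens C (mid C H) d)"

definition is_hopf :: "('o, 'm) smcat \<Rightarrow> 'o \<Rightarrow> 'm \<Rightarrow> 'm \<Rightarrow> 'm \<Rightarrow> 'm \<Rightarrow> 'm \<Rightarrow> bool" where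
  "is_hopf C H mu eta Delta eps s \<longleftrightarrow>
     is_monoid C H mu eta \<and> is_comonoid C H Delta eps \<and> hom C s H H \<and>
     mcomp C Delta mu =
       mcomp C (mtens C mu mu)
         (mcomp C (mtens C (mid C H) (mtens C (msym C H H) (mid C H))) (mtens C Delta Delta)) \<and>
     mcomp C Delta eta = mtens C eta eta \<and>
     mcomp C eps mu = mtens C eps eps \<and>
     mcomp C eps eta = mid C (munit C) \<and>
     mcomp C mu (mcomp C (mtens C s (mid C H)) Delta) = mcomp C eta eps \<and>
     mcomp C mu (mcomp C (mtens C (mid C H) s) Delta) = mcomp C eta eps"

definition is_left_cointegral :: "('o, 'm) smcat \<Rightarrow> 'o \<Rightarrow> 'm \<Rightarrow> 'm \<Rightarrow> 'm \<Rightarrow> bool" where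
  "is_left_cointegral C H mu eps Lam \<longleftrightarrow>
     hom C Lam (munit C) H \<and> mcomp C mu (mtens C Lam (mid C H)) = mcomp C Lam eps"

definition is_right_integral :: "('o, 'm) smcat \<Rightarrow> 'o \<Rightarrow> 'm \<Rightarrow> 'm \<Rightarrow> 'm \<Rightarrow> bool" where
  "is_right_integral C H eta Delta lam \<longleftrightarrow>
     hom C lam H (munit C) \<and> mcomp C (mtens C (mid C H) lam) Delta = mcomp C eta lam"

definition integral_hopf ::
  "('o, 'm) smcat \<Rightarrow> 'o \<Rightarrow> 'm \<Rightarrow> 'm \<Rightarrow> 'm \<Rightarrow> 'm \<Rightarrow> 'm \<Rightarrow> 'm \<Rightarrow> 'm \<Rightarrow> bool" where
  "integral_hopf C H mu eta Delta eps s Lam lam \<longleftrightarrow>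
     is_hopf C H mu eta Delta eps s \<and>
     is_left_cointegral C H mu eps Lam \<and>
     is_right_integral C H eta Delta lam \<and>
     mcomp C lam Lam = mid C (munit C)"

definition pre_hopf_frobenius ::
  "('o, 'm) smcat \<Rightarrow> 'o \<Rightarrow> 'm \<Rightarrow> 'm \<Rightarrow> 'm \<Rightarrow> 'm \<Rightarrow> 'm \<Rightarrow> 'm \<Rightarrow> 'm \<Rightarrow> 'm \<Rightarrow> 'm \<Rightarrow> bool" where
  "pre_hopf_frobenius C H mu_g eta_g delta_g eps_g mu_r eta_r delta_r eps_r s \<longleftrightarrow>
     is_frobenius C H mu_g eta_g delta_g eps_g \<and>
     is_frobenius C H mu_r eta_r delta_r eps_r \<and>
     is_hopf C H mu_g eta_g delta_r eps_r s"

end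

theory Submission
  imports Defs
begin

locale ssmc =
  fixes C :: "('o, 'm) smcat"
  assumes ssmc: "strict_symmetric_monoidal_cat C"
begin

abbreviation cc (infixr "\<cdot>" 55) where "f \<cdot> g \<equiv> mcomp C f g"
abbreviation tt (infixr "\<otimes>" 60) where "f \<otimes> g \<equiv> mtens C f g"
abbreviation ii ("\<one>") where "\<one> \<equiv> mid C"
abbreviation dd where "dd \<equiv> mdom C"
abbreviation co where "co \<equiv> mcod C"
abbreviation ot where "ot \<equiv> otens C"
abbreviation II where "II \<equiv> munit C"

lemma dom_id[simp]: "dd (\<one> A) = A" and cod_id[simp]: "co (\<one> A) = A"
  using ssmc unfolding strict_symmetric_monoidal_cat_def hom_def by auto

lemma dom_comp[simp]: "dd f = co g \<Longrightarrow> dd (f \<cdot> g) = dd g"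
  and cod_comp[simp]: "dd f = co g \<Longrightarrow> co (f \<cdot> g) = co f"
  using ssmc unfolding strict_symmetric_monoidal_cat_def hom_def by auto

lemma assoc: "dd f = co g \<Longrightarrow> dd g = co h \<Longrightarrow> (f \<cdot> g) \<cdot> h = f \<cdot> (g \<cdot> h)"
  using ssmc unfolding strict_symmetric_monoidal_cat_def by auto

lemma id_right[simp]: "dd f = A \<Longrightarrow> f \<cdot> \<one> A = f"
  and id_left[simp]: "co f = A \<Longrightarrow> \<one> A \<cdot> f = f"
  using ssmc unfolding strict_symmetric_monoidal_cat_def by auto

lemma dom_tens[simp]: "dd (f \<otimes> g) = ot (dd f) (dd g)"
  and cod_tens[simp]: "co (f \<otimes> g) = ot (co f) (co g)"
  using ssmc unfolding strict_symmetric_monoidal_cat_def hom_def by auto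

lemma tens_id[simp]: "\<one> A \<otimes> \<one> B = \<one> (ot A B)"
  using ssmc unfolding strict_symmetric_monoidal_cat_def by auto

lemma interchange: "dd f = co g \<Longrightarrow> dd h = co k \<Longrightarrow> (f \<cdot> g) \<otimes> (h \<cdot> k) = (f \<otimes> h) \<cdot> (g \<otimes> k)"
  using ssmc unfolding strict_symmetric_monoidal_cat_def by auto

lemma ot_assoc[simp]: "ot (ot A B) D = ot A (ot B D)"
  and ot_unit[simp]: "ot II A = A" "ot A II = A"
  using ssmc unfolding strict_symmetric_monoidal_cat_def by auto

lemma tens_assoc[simp]: "(f \<otimes> g) \<otimes> h = f \<otimes> (g \<otimes> h)"
  and tens_unit[simp]: "\<one> II \<otimes> f = f" "f \<otimes> \<one> II = f"
  using ssmc unfolding strict_symmetric_monoidal_cat_def by auto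

lemma sym_hom[simp]: "dd (msym C A B) = ot A B" "co (msym C A B) = ot B A"
  using ssmc unfolding strict_symmetric_monoidal_cat_def hom_def by auto

lemma sym_nat: "msym C (co f) (co g) \<cdot> (f \<otimes> g) = (g \<otimes> f) \<cdot> msym C (dd f) (dd g)"
  using ssmc unfolding strict_symmetric_monoidal_cat_def by auto

lemma sym_inv: "msym C B A \<cdot> msym C A B = \<one> (ot A B)"
  using ssmc unfolding strict_symmetric_monoidal_cat_def by auto

lemma sym_hex: "msym C A (ot B D) = (\<one> B \<otimes> msym C A D) \<cdot> (msym C A B \<otimes> \<one> D)"
  using ssmc unfolding strict_symmetric_monoidal_cat_def by auto

lemma sym_AI: "msym C A II = \<one> A"
proof -
  have e: "msym C A II = msym C A II \<cdot> msym C A II"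
    using sym_hex[of A II II] by simp
  have "msym C A II = (msym C II A \<cdot> msym C A II) \<cdot> msym C A II"
    using sym_inv[where A=A and B=II] by simp
  also have "\<dots> = msym C II A \<cdot> msym C A II" using e by (simp add: assoc)
  also have "\<dots> = \<one> A" using sym_inv[where A=A and B=II] by simp
  finally show ?thesis .
qed

lemma sym_IA[simp]: "msym C II A = \<one> A"
  using sym_inv[where A=A and B=II] by (simp add: sym_AI)

lemma sym_AI'[simp]: "msym C A II = \<one> A" by (rule sym_AI)

lemma split_l: "f \<otimes> g = (f \<otimes> \<one> (co g)) \<cdot> (\<one> (dd f) \<otimes> g)"
  using interchange[of f "\<one> (dd f)" "\<one> (co g)" g] by simp
lemma split_r: "f \<otimes> g = (\<one> (co f) \<otimes> g) \<cdot> (f \<otimes> \<one> (dd g))"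
  using interchange[of "\<one> (co f)" f g "\<one> (dd g)"] by simp

lemma comp_tens_l[simp]: "dd f = co g \<Longrightarrow> (f \<cdot> g) \<otimes> \<one> A = (f \<otimes> \<one> A) \<cdot> (g \<otimes> \<one> A)"
  using interchange[of f g "\<one> A" "\<one> A"] by simp
lemma comp_tens_r[simp]: "dd f = co g \<Longrightarrow> \<one> A \<otimes> (f \<cdot> g) = (\<one> A \<otimes> f) \<cdot> (\<one> A \<otimes> g)"
  using interchange[of "\<one> A" "\<one> A" f g] by simp
lemma scal_comm: "co f = II \<Longrightarrow> co g = II \<Longrightarrow> f \<cdot> (\<one> (dd f) \<otimes> g) = g \<cdot> (f \<otimes> \<one> (dd g))"
  using split_l[of f g] split_r[of f g] by simp
lemma tens_id2[simp]: "\<one> A \<otimes> (\<one> B \<otimes> f) = \<one> (ot A B) \<otimes> f"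
  by (metis tens_assoc tens_id)
lemma assoc'[simp]: "dd f = co g \<Longrightarrow> dd g = co h \<Longrightarrow> (f \<cdot> g) \<cdot> h = f \<cdot> (g \<cdot> h)"
  by (rule assoc)
lemma chain2: "f \<cdot> g = h \<cdot> k \<Longrightarrow> dd f = co g \<Longrightarrow> dd h = co k \<Longrightarrow> dd g = co X \<Longrightarrow> dd k = co X \<Longrightarrow> f \<cdot> (g \<cdot> X) = h \<cdot> (k \<cdot> X)"
  by (metis assoc)
lemma chain1: "f \<cdot> g = h \<Longrightarrow> dd f = co g \<Longrightarrow> dd g = co X \<Longrightarrow> f \<cdot> (g \<cdot> X) = h \<cdot> X"
  by (metis assoc)

end

locale phf = ssmc C for C :: "('o, 'm) smcat" +
  fixes H :: 'o and mg eg dg ug mr er dr ur s :: 'm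
  assumes pre: "pre_hopf_frobenius C H mg eg dg ug mr er dr ur s"
begin

lemma Fg: "is_frobenius C H mg eg dg ug" and Fr: "is_frobenius C H mr er dr ur"
  and Hp: "is_hopf C H mg eg dr ur s"
  using pre unfolding pre_hopf_frobenius_def by auto

lemma ty[simp]:
  "dd mg = ot H H" "co mg = H" "dd eg = II" "co eg = H" "dd dg = H" "co dg = ot H H" "dd ug = H" "co ug = II"
  "dd mr = ot H H" "co mr = H" "dd er = II" "co er = H" "dd dr = H" "co dr = ot H H" "dd ur = H" "co ur = II"
  "dd s = H" "co s = H"
  using Fg Fr Hp unfolding is_frobenius_def is_monoid_def is_comonoid_def is_hopf_def hom_def by auto

lemma g_assoc: "mg \<cdot> (mg \<otimes> \<one> H) = mg \<cdot> (\<one> H \<otimes> mg)"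
  and g_unl: "mg \<cdot> (eg \<otimes> \<one> H) = \<one> H" and g_unr: "mg \<cdot> (\<one> H \<otimes> eg) = \<one> H"
  and g_coassoc: "(dg \<otimes> \<one> H) \<cdot> dg = (\<one> H \<otimes> dg) \<cdot> dg"
  and g_counl: "(ug \<otimes> \<one> H) \<cdot> dg = \<one> H" and g_counr: "(\<one> H \<otimes> ug) \<cdot> dg = \<one> H"
  and g_frobl: "(\<one> H \<otimes> mg) \<cdot> (dg \<otimes> \<one> H) = dg \<cdot> mg"
  and g_frobr: "(mg \<otimes> \<one> H) \<cdot> (\<one> H \<otimes> dg) = dg \<cdot> mg"
  using Fg unfolding is_frobenius_def is_monoid_def is_comonoid_def by auto

lemma r_assoc: "mr \<cdot> (mr \<otimes> \<one> H) = mr \<cdot> (\<one> H \<otimes> mr)"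
  and r_unl: "mr \<cdot> (er \<otimes> \<one> H) = \<one> H" and r_unr: "mr \<cdot> (\<one> H \<otimes> er) = \<one> H"
  and r_coassoc: "(dr \<otimes> \<one> H) \<cdot> dr = (\<one> H \<otimes> dr) \<cdot> dr"
  and r_counl: "(ur \<otimes> \<one> H) \<cdot> dr = \<one> H" and r_counr: "(\<one> H \<otimes> ur) \<cdot> dr = \<one> H"
  and r_frobl: "(\<one> H \<otimes> mr) \<cdot> (dr \<otimes> \<one> H) = dr \<cdot> mr"
  and r_frobr: "(mr \<otimes> \<one> H) \<cdot> (\<one> H \<otimes> dr) = dr \<cdot> mr"
  using Fr unfolding is_frobenius_def is_monoid_def is_comonoid_def by auto

lemma h_bialg: "dr \<cdot> mg = (mg \<otimes> mg) \<cdot> ((\<one> H \<otimes> (msym C H H \<otimes> \<one> H)) \<cdot> (dr \<otimes> dr))"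
  and h_deta: "dr \<cdot> eg = eg \<otimes> eg"
  and h_epsmu: "ur \<cdot> mg = ur \<otimes> ur"
  and h_epseta: "ur \<cdot> eg = \<one> II"
  and h_antl: "mg \<cdot> ((s \<otimes> \<one> H) \<cdot> dr) = eg \<cdot> ur"
  and h_antr: "mg \<cdot> ((\<one> H \<otimes> s) \<cdot> dr) = eg \<cdot> ur"
  using Hp unfolding is_hopf_def by auto

definition "capg = ug \<cdot> mg"
definition "cupg = dg \<cdot> eg"
definition "capr = ur \<cdot> mr"
definition "cupr = dr \<cdot> er"

lemma ty2[simp]: "dd capg = ot H H" "co capg = II" "dd cupg = II" "co cupg = ot H H"
  "dd capr = ot H H" "co capr = II" "dd cupr = II" "co cupr = ot H H"
  unfolding capg_def cupg_def capr_def cupr_def by simp_all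

lemma snake_g1: "(\<one> H \<otimes> capg) \<cdot> (cupg \<otimes> \<one> H) = \<one> H"
proof -
  have "(\<one> H \<otimes> capg) \<cdot> (cupg \<otimes> \<one> H) = (\<one> H \<otimes> ug) \<cdot> ((\<one> H \<otimes> mg) \<cdot> ((dg \<otimes> \<one> H) \<cdot> (eg \<otimes> \<one> H)))"
    by (simp add: capg_def cupg_def)
  also have "\<dots> = (\<one> H \<otimes> ug) \<cdot> (dg \<cdot> (mg \<cdot> (eg \<otimes> \<one> H)))"
    using chain2[OF g_frobl[symmetric]] by simp
  also have "\<dots> = \<one> H" by (simp add: g_unl g_counr)
  finally show ?thesis .
qed

lemma snake_g2: "(capg \<otimes> \<one> H) \<cdot> (\<one> H \<otimes> cupg) = \<one> H"
proof -
  have "(capg \<otimes> \<one> H) \<cdot> (\<one> H \<otimes> cupg) = (ug \<otimes> \<one> H) \<cdot> ((mg \<otimes> \<one> H) \<cdot> ((\<one> H \<otimes> dg) \<cdot> (\<one> H \<otimes> eg)))"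
    by (simp add: capg_def cupg_def)
  also have "\<dots> = (ug \<otimes> \<one> H) \<cdot> (dg \<cdot> (mg \<cdot> (\<one> H \<otimes> eg)))"
    using chain2[OF g_frobr] by simp
  also have "\<dots> = \<one> H" by (simp add: g_unr g_counl)
  finally show ?thesis .
qed

lemma snake_r1: "(\<one> H \<otimes> capr) \<cdot> (cupr \<otimes> \<one> H) = \<one> H"
proof -
  have "(\<one> H \<otimes> capr) \<cdot> (cupr \<otimes> \<one> H) = (\<one> H \<otimes> ur) \<cdot> ((\<one> H \<otimes> mr) \<cdot> ((dr \<otimes> \<one> H) \<cdot> (er \<otimes> \<one> H)))"
    by (simp add: capr_def cupr_def)
  also have "\<dots> = (\<one> H \<otimes> ur) \<cdot> (dr \<cdot> (mr \<cdot> (er \<otimes> \<one> H)))"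
    using chain2[OF r_frobl] by simp
  also have "\<dots> = \<one> H" by (simp add: r_unl r_counr)
  finally show ?thesis .
qed

lemma snake_r2: "(capr \<otimes> \<one> H) \<cdot> (\<one> H \<otimes> cupr) = \<one> H"
proof -
  have "(capr \<otimes> \<one> H) \<cdot> (\<one> H \<otimes> cupr) = (ur \<otimes> \<one> H) \<cdot> ((mr \<otimes> \<one> H) \<cdot> ((\<one> H \<otimes> dr) \<cdot> (\<one> H \<otimes> er)))"
    by (simp add: capr_def cupr_def)
  also have "\<dots> = (ur \<otimes> \<one> H) \<cdot> (dr \<cdot> (mr \<cdot> (\<one> H \<otimes> er)))"
    using chain2[OF r_frobr] by simp
  also have "\<dots> = \<one> H" by (simp add: r_unr r_counl)
  finally show ?thesis .
qed

lemma frob_capr1: "(\<one> H \<otimes> capr) \<cdot> (dr \<otimes> \<one> H) = mr"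
proof -
  have "(\<one> H \<otimes> capr) \<cdot> (dr \<otimes> \<one> H) = (\<one> H \<otimes> ur) \<cdot> ((\<one> H \<otimes> mr) \<cdot> (dr \<otimes> \<one> H))"
    by (simp add: capr_def)
  also have "\<dots> = (\<one> H \<otimes> ur) \<cdot> (dr \<cdot> mr)" by (simp add: r_frobl)
  also have "\<dots> = mr" using chain1[OF r_counr, of mr] by simp
  finally show ?thesis .
qed

lemma frob_capr2: "(capr \<otimes> \<one> H) \<cdot> (\<one> H \<otimes> dr) = mr"
proof -
  have "(capr \<otimes> \<one> H) \<cdot> (\<one> H \<otimes> dr) = (ur \<otimes> \<one> H) \<cdot> ((mr \<otimes> \<one> H) \<cdot> (\<one> H \<otimes> dr))"
    by (simp add: capr_def)
  also have "\<dots> = (ur \<otimes> \<one> H) \<cdot> (dr \<cdot> mr)" by (simp add: r_frobr)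
  also have "\<dots> = mr" using chain1[OF r_counl, of mr] by simp
  finally show ?thesis .
qed

lemma s_eta: "s \<cdot> eg = eg"
proof -
  have "eg = (eg \<cdot> ur) \<cdot> eg" by (simp add: h_epseta)
  also have "\<dots> = mg \<cdot> ((s \<otimes> \<one> H) \<cdot> (dr \<cdot> eg))" by (simp add: h_antl[symmetric])
  also have "\<dots> = mg \<cdot> ((s \<otimes> \<one> H) \<cdot> (eg \<otimes> eg))" by (simp add: h_deta)
  also have "(s \<otimes> \<one> H) \<cdot> (eg \<otimes> eg) = (s \<cdot> eg) \<otimes> (\<one> H \<cdot> eg)"
    using interchange[of s eg "\<one> H" eg] by simp
  also have "\<dots> = (\<one> H \<otimes> eg) \<cdot> (s \<cdot> eg)"
    using split_r[of "s \<cdot> eg" eg] by simp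
  also have "mg \<cdot> ((\<one> H \<otimes> eg) \<cdot> (s \<cdot> eg)) = s \<cdot> eg"
    using chain1[OF g_unr, of "s \<cdot> eg"] by simp
  finally show ?thesis ..
qed

lemma eps_s: "ur \<cdot> s = ur"
proof -
  have "ur = (ur \<cdot> eg) \<cdot> ur" by (simp add: h_epseta)
  also have "\<dots> = (ur \<cdot> mg) \<cdot> ((s \<otimes> \<one> H) \<cdot> dr)" by (simp add: h_antl[symmetric])
  also have "\<dots> = (ur \<otimes> ur) \<cdot> ((s \<otimes> \<one> H) \<cdot> dr)" by (simp add: h_epsmu)
  also have "(ur \<otimes> ur) \<cdot> ((s \<otimes> \<one> H) \<cdot> dr) = ((ur \<otimes> ur) \<cdot> (s \<otimes> \<one> H)) \<cdot> dr"
    by simp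
  also have "(ur \<otimes> ur) \<cdot> (s \<otimes> \<one> H) = (ur \<cdot> s) \<otimes> (ur \<cdot> \<one> H)"
    using interchange[of ur s ur "\<one> H"] by simp
  also have "\<dots> = (ur \<cdot> s) \<cdot> (\<one> H \<otimes> ur)"
    using split_l[of "ur \<cdot> s" ur] by simp
  also have "((ur \<cdot> s) \<cdot> (\<one> H \<otimes> ur)) \<cdot> dr = ur \<cdot> s" by (simp add: r_counr)
  finally show ?thesis ..
qed

definition "tinv = (\<one> H \<otimes> capg) \<cdot> (cupr \<otimes> \<one> H)"
lemma ty3[simp]: "dd tinv = H" "co tinv = H" unfolding tinv_def by simp_all

abbreviation "HH \<equiv> ot H H"
abbreviation "HHH \<equiv> ot H (ot H H)"

context
  assumes S: "s = (\<one> H \<otimes> capr) \<cdot> (cupg \<otimes> \<one> H)"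
begin

lemma K1: "capg \<cdot> (\<one> H \<otimes> s) = capr"
proof -
  have "capg \<cdot> (\<one> H \<otimes> s) = (capg \<cdot> (\<one> (ot H H) \<otimes> capr)) \<cdot> (\<one> H \<otimes> (cupg \<otimes> \<one> H))"
    by (simp add: S)
  also have "capg \<cdot> (\<one> (ot H H) \<otimes> capr) = capr \<cdot> (capg \<otimes> \<one> (ot H H))"
    using scal_comm[of capg capr] by simp
  also have "(capr \<cdot> (capg \<otimes> \<one> (ot H H))) \<cdot> (\<one> H \<otimes> (cupg \<otimes> \<one> H)) 
      = capr \<cdot> (((capg \<otimes> \<one> H) \<cdot> (\<one> H \<otimes> cupg)) \<otimes> (\<one> H \<cdot> \<one> H))"
    using interchange[of "capg \<otimes> \<one> H" "\<one> H \<otimes> cupg" "\<one> H" "\<one> H"] by simp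
  also have "\<dots> = capr" by (simp add: snake_g2)
  finally show ?thesis .
qed

lemma Lg: "ug = capr \<cdot> (\<one> H \<otimes> eg)"
proof -
  have "ug = capg \<cdot> (\<one> H \<otimes> eg)" by (simp add: capg_def g_unr)
  also have "\<dots> = capg \<cdot> (\<one> H \<otimes> (s \<cdot> eg))" by (simp add: s_eta)
  also have "\<dots> = (capg \<cdot> (\<one> H \<otimes> s)) \<cdot> (\<one> H \<otimes> eg)" by simp
  also have "\<dots> = capr \<cdot> (\<one> H \<otimes> eg)" by (simp add: K1)
  finally show ?thesis .
qed

lemma Cc: "ug \<cdot> er = \<one> II"
proof -
  have "ug \<cdot> er = capr \<cdot> ((\<one> H \<otimes> eg) \<cdot> er)" by (subst Lg, simp)
  also have "(\<one> H \<otimes> eg) \<cdot> er = (er \<otimes> \<one> H) \<cdot> eg"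
    using split_l[of er eg] split_r[of er eg] by simp
  also have "capr \<cdot> ((er \<otimes> \<one> H) \<cdot> eg) = ur \<cdot> eg"
    using chain1[OF r_unl, of eg] by (simp add: capr_def)
  also have "\<dots> = \<one> II" by (rule h_epseta)
  finally show ?thesis .
qed

lemma Bb: "(\<one> H \<otimes> ug) \<cdot> dr = eg \<cdot> ug"
proof -
  have "(\<one> H \<otimes> ug) \<cdot> dr = (\<one> H \<otimes> capr) \<cdot> ((\<one> (ot H H) \<otimes> eg) \<cdot> dr)"
    by (subst Lg, simp)
  also have "(\<one> (ot H H) \<otimes> eg) \<cdot> dr = (dr \<otimes> \<one> H) \<cdot> (\<one> H \<otimes> eg)"
    using split_l[of dr eg] split_r[of dr eg] by simp
  also have "(\<one> H \<otimes> capr) \<cdot> ((dr \<otimes> \<one> H) \<cdot> (\<one> H \<otimes> eg)) = mr \<cdot> (\<one> H \<otimes> eg)"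
    using chain1[OF frob_capr1, of "\<one> H \<otimes> eg"] by simp
  finally have 1: "(\<one> H \<otimes> ug) \<cdot> dr = mr \<cdot> (\<one> H \<otimes> eg)" .
  have "eg \<cdot> ug = (eg \<cdot> capr) \<cdot> (\<one> H \<otimes> eg)" by (subst Lg, simp)
  also have "eg \<cdot> capr = (capr \<otimes> \<one> H) \<cdot> (\<one> (ot H H) \<otimes> eg)"
    using split_l[of capr eg] split_r[of capr eg] by simp
  also have "((capr \<otimes> \<one> H) \<cdot> (\<one> (ot H H) \<otimes> eg)) \<cdot> (\<one> H \<otimes> eg)
     = (capr \<otimes> \<one> H) \<cdot> (\<one> H \<otimes> ((\<one> H \<otimes> eg) \<cdot> eg))" by simp
  also have "(\<one> H \<otimes> eg) \<cdot> eg = dr \<cdot> eg"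
    using split_r[of eg eg] by (simp add: h_deta)
  also have "(capr \<otimes> \<one> H) \<cdot> (\<one> H \<otimes> (dr \<cdot> eg)) = mr \<cdot> (\<one> H \<otimes> eg)"
    using chain1[OF frob_capr2, of "\<one> H \<otimes> eg"] by simp
  finally show ?thesis using 1 by simp
qed

lemma T: "s \<cdot> tinv = \<one> H"
proof -
  have "s \<cdot> tinv = (\<one> H \<otimes> capr) \<cdot> ((cupg \<otimes> \<one> H) \<cdot> (\<one> H \<otimes> capg)) \<cdot> (cupr \<otimes> \<one> H)"
    by (simp add: S tinv_def)
  also have "(cupg \<otimes> \<one> H) \<cdot> (\<one> H \<otimes> capg) = (\<one> HH \<otimes> (\<one> H \<otimes> capg)) \<cdot> (cupg \<otimes> \<one> HHH)"
    using split_l[of cupg "\<one> H \<otimes> capg"] split_r[of cupg "\<one> H \<otimes> capg"] by simp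
  also have "(\<one> H \<otimes> capr) \<cdot> ((\<one> HH \<otimes> (\<one> H \<otimes> capg)) \<cdot> (cupg \<otimes> \<one> HHH)) \<cdot> (cupr \<otimes> \<one> H)
     = ((\<one> H \<otimes> capr) \<cdot> (\<one> HHH \<otimes> capg)) \<cdot> ((cupg \<otimes> \<one> HHH) \<cdot> (cupr \<otimes> \<one> H))" by simp
  also have "(\<one> H \<otimes> capr) \<cdot> (\<one> HHH \<otimes> capg) = (\<one> H \<otimes> capg) \<cdot> (\<one> H \<otimes> (capr \<otimes> \<one> HH))"
    using arg_cong[OF scal_comm[of capr capg], of "\<lambda>x. \<one> H \<otimes> x"] by simp
  also have "(cupg \<otimes> \<one> HHH) \<cdot> (cupr \<otimes> \<one> H) = (\<one> HH \<otimes> (cupr \<otimes> \<one> H)) \<cdot> (cupg \<otimes> \<one> H)"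
    using split_l[of cupg "cupr \<otimes> \<one> H"] split_r[of cupg "cupr \<otimes> \<one> H"] by simp
  also have "((\<one> H \<otimes> capg) \<cdot> (\<one> H \<otimes> (capr \<otimes> \<one> HH))) \<cdot> ((\<one> HH \<otimes> (cupr \<otimes> \<one> H)) \<cdot> (cupg \<otimes> \<one> H))
     = (\<one> H \<otimes> capg) \<cdot> (((\<one> H \<otimes> (capr \<otimes> \<one> HH)) \<cdot> (\<one> HH \<otimes> (cupr \<otimes> \<one> H))) \<cdot> (cupg \<otimes> \<one> H))" by simp
  also have "(\<one> H \<otimes> (capr \<otimes> \<one> HH)) \<cdot> (\<one> HH \<otimes> (cupr \<otimes> \<one> H)) = \<one> HHH"
  proof -
    have "(capr \<otimes> \<one> HH) \<cdot> (\<one> H \<otimes> (cupr \<otimes> \<one> H)) = \<one> HH"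
      using interchange[of "capr \<otimes> \<one> H" "\<one> H \<otimes> cupr" "\<one> H" "\<one> H"] by (simp add: snake_r2)
    from arg_cong[OF this, of "\<lambda>x. \<one> H \<otimes> x"] show ?thesis by simp
  qed
  also have "(\<one> H \<otimes> capg) \<cdot> (\<one> HHH \<cdot> (cupg \<otimes> \<one> H)) = \<one> H" by (simp add: snake_g1)
  finally show ?thesis .
qed

lemma N: "capg \<cdot> (er \<otimes> \<one> H) = ur"
proof -
  have "capg \<cdot> (er \<otimes> \<one> H) = capg \<cdot> ((er \<otimes> \<one> H) \<cdot> (s \<cdot> tinv))" by (simp add: T)
  also have "\<dots> = capg \<cdot> (((er \<otimes> \<one> H) \<cdot> s) \<cdot> tinv)" by simp
  also have "(er \<otimes> \<one> H) \<cdot> s = (\<one> H \<otimes> s) \<cdot> (er \<otimes> \<one> H)"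
    using split_l[of er s] split_r[of er s] by simp
  also have "capg \<cdot> (((\<one> H \<otimes> s) \<cdot> (er \<otimes> \<one> H)) \<cdot> tinv) = (capg \<cdot> (\<one> H \<otimes> s)) \<cdot> ((er \<otimes> \<one> H) \<cdot> tinv)"
    by simp
  also have "\<dots> = ur \<cdot> (mr \<cdot> ((er \<otimes> \<one> H) \<cdot> tinv))" by (simp add: K1 capr_def)
  also have "\<dots> = (ur \<cdot> s) \<cdot> tinv" using chain1[OF r_unl, of tinv] by (simp add: eps_s)
  also have "\<dots> = ur" by (simp add: T)
  finally show ?thesis .
qed

lemma Aa: "mg \<cdot> (er \<otimes> \<one> H) = er \<cdot> ur"
proof -
  define X where "X = mg \<cdot> (er \<otimes> \<one> H)"
  have tyX[simp]: "dd X = H" "co X = H" unfolding X_def by simp_all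
  have a1: "capr \<cdot> (X \<otimes> \<one> H) = ur \<otimes> ur"
  proof -
    have "capr \<cdot> (X \<otimes> \<one> H) = capg \<cdot> ((\<one> H \<otimes> s) \<cdot> (X \<otimes> \<one> H))" by (simp add: K1[symmetric])
    also have "(\<one> H \<otimes> s) \<cdot> (X \<otimes> \<one> H) = (X \<otimes> \<one> H) \<cdot> (\<one> H \<otimes> s)"
      using split_l[of X s] split_r[of X s] by simp
    also have "capg \<cdot> ((X \<otimes> \<one> H) \<cdot> (\<one> H \<otimes> s)) = (ug \<cdot> (mg \<cdot> (mg \<otimes> \<one> H))) \<cdot> ((er \<otimes> \<one> HH) \<cdot> (\<one> H \<otimes> s))"
      by (simp add: X_def capg_def)
    also have "\<dots> = ug \<cdot> (mg \<cdot> (((\<one> H \<otimes> mg) \<cdot> (er \<otimes> \<one> HH)) \<cdot> (\<one> H \<otimes> s)))" by (simp add: g_assoc)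
    also have "(\<one> H \<otimes> mg) \<cdot> (er \<otimes> \<one> HH) = (er \<otimes> \<one> H) \<cdot> mg"
      using split_l[of er mg] split_r[of er mg] by simp
    also have "ug \<cdot> (mg \<cdot> (((er \<otimes> \<one> H) \<cdot> mg) \<cdot> (\<one> H \<otimes> s))) = (capg \<cdot> (er \<otimes> \<one> H)) \<cdot> (mg \<cdot> (\<one> H \<otimes> s))"
      by (simp add: capg_def)
    also have "\<dots> = (ur \<cdot> mg) \<cdot> (\<one> H \<otimes> s)" by (simp add: N)
    also have "\<dots> = (ur \<otimes> ur) \<cdot> (\<one> H \<otimes> s)" by (simp add: h_epsmu)
    also have "\<dots> = (ur \<cdot> \<one> H) \<otimes> (ur \<cdot> s)" using interchange[of ur "\<one> H" ur s] by simp
    also have "\<dots> = ur \<otimes> ur" by (simp add: eps_s)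
    finally show ?thesis .
  qed
  have "X = ((capr \<otimes> \<one> H) \<cdot> (\<one> H \<otimes> cupr)) \<cdot> X" by (simp add: snake_r2)
  also have "\<dots> = (capr \<otimes> \<one> H) \<cdot> ((\<one> H \<otimes> cupr) \<cdot> X)" by simp
  also have "(\<one> H \<otimes> cupr) \<cdot> X = (X \<otimes> \<one> HH) \<cdot> (\<one> H \<otimes> cupr)"
    using split_l[of X cupr] split_r[of X cupr] by simp
  also have "(capr \<otimes> \<one> H) \<cdot> ((X \<otimes> \<one> HH) \<cdot> (\<one> H \<otimes> cupr)) = ((capr \<otimes> \<one> H) \<cdot> (X \<otimes> \<one> HH)) \<cdot> (\<one> H \<otimes> cupr)"
    by simp
  also have "(capr \<otimes> \<one> H) \<cdot> (X \<otimes> \<one> HH) = (capr \<cdot> (X \<otimes> \<one> H)) \<otimes> (\<one> H \<cdot> \<one> H)"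
    using interchange[of capr "X \<otimes> \<one> H" "\<one> H" "\<one> H"] by simp
  also have "\<dots> = ur \<otimes> (ur \<otimes> \<one> H)" by (simp add: a1)
  also have "(ur \<otimes> (ur \<otimes> \<one> H)) \<cdot> (\<one> H \<otimes> cupr) = (ur \<cdot> \<one> H) \<otimes> ((ur \<otimes> \<one> H) \<cdot> cupr)"
    using interchange[of ur "\<one> H" "ur \<otimes> \<one> H" cupr] by simp
  also have "\<dots> = ur \<otimes> er" using chain1[OF r_counl, of er] by (simp add: cupr_def)
  also have "\<dots> = er \<cdot> ur" using split_r[of ur er] by simp
  finally show ?thesis by (simp add: X_def)
qed

end

lemma sym_ug: "(\<one> H \<otimes> ug) \<cdot> msym C H H = ug \<otimes> \<one> H"
  using sym_nat[of ug "\<one> H"] by simp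

context
  assumes A: "mg \<cdot> (er \<otimes> \<one> H) = er \<cdot> ur"
    and B: "(\<one> H \<otimes> ug) \<cdot> dr = eg \<cdot> ug"
    and C0: "ug \<cdot> er = \<one> II"
begin

lemma P: "(\<one> H \<otimes> (capg \<cdot> (\<one> H \<otimes> s))) \<cdot> (cupr \<otimes> \<one> H) = \<one> H"
proof -
  define Q where "Q = capg \<cdot> (\<one> H \<otimes> s)"
  have tyQ[simp]: "dd Q = HH" "co Q = II" unfolding Q_def by simp_all
  define \<sigma> where "\<sigma> = msym C H H"
  have tys[simp]: "dd \<sigma> = HH" "co \<sigma> = HH" unfolding \<sigma>_def by simp_all
  have bialg: "dr \<cdot> mg = (mg \<otimes> mg) \<cdot> ((\<one> H \<otimes> (\<sigma> \<otimes> \<one> H)) \<cdot> (dr \<otimes> dr))"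
    unfolding \<sigma>_def by (rule h_bialg)
  have "(\<one> H \<otimes> Q) \<cdot> (cupr \<otimes> \<one> H) = (\<one> H \<otimes> Q) \<cdot> (((cupr \<cdot> ur) \<otimes> \<one> H) \<cdot> dr)"
    by (simp add: r_counl)
  also have "cupr \<cdot> ur = (dr \<cdot> mg) \<cdot> (er \<otimes> \<one> H)" by (simp add: cupr_def A)
  also have "(dr \<cdot> mg) \<cdot> (er \<otimes> \<one> H) = (mg \<otimes> mg) \<cdot> ((\<one> H \<otimes> (\<sigma> \<otimes> \<one> H)) \<cdot> ((dr \<otimes> dr) \<cdot> (er \<otimes> \<one> H)))"
    by (simp add: bialg)
  also have "(dr \<otimes> dr) \<cdot> (er \<otimes> \<one> H) = cupr \<otimes> dr"
    using interchange[of dr er dr "\<one> H"] by (simp add: cupr_def)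
  also have "(\<one> H \<otimes> Q) \<cdot> ((((mg \<otimes> mg) \<cdot> ((\<one> H \<otimes> (\<sigma> \<otimes> \<one> H)) \<cdot> (cupr \<otimes> dr))) \<otimes> \<one> H) \<cdot> dr)
     = ((\<one> H \<otimes> Q) \<cdot> (mg \<otimes> (mg \<otimes> \<one> H))) \<cdot> ((\<one> H \<otimes> (\<sigma> \<otimes> \<one> HH)) \<cdot> (((cupr \<otimes> (dr \<otimes> \<one> H))) \<cdot> dr))"
    by simp
  also have "(cupr \<otimes> (dr \<otimes> \<one> H)) \<cdot> dr = cupr \<otimes> ((dr \<otimes> \<one> H) \<cdot> dr)"
    using interchange[of cupr "\<one> II" "dr \<otimes> \<one> H" dr] by simp
  also have "\<dots> = cupr \<otimes> ((\<one> H \<otimes> dr) \<cdot> dr)" by (simp add: r_coassoc)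
  also have "\<dots> = (\<one> HHH \<otimes> dr) \<cdot> (cupr \<otimes> dr)"
    using interchange[of "\<one> HH" cupr "\<one> H \<otimes> dr" dr] by simp
  also have "(\<one> H \<otimes> (\<sigma> \<otimes> \<one> HH)) \<cdot> ((\<one> HHH \<otimes> dr) \<cdot> (cupr \<otimes> dr))
      = ((\<one> H \<otimes> (\<sigma> \<otimes> \<one> HH)) \<cdot> (\<one> HHH \<otimes> dr)) \<cdot> (cupr \<otimes> dr)" by simp
  also have "(\<one> H \<otimes> (\<sigma> \<otimes> \<one> HH)) \<cdot> (\<one> HHH \<otimes> dr) = (\<one> HHH \<otimes> dr) \<cdot> (\<one> H \<otimes> (\<sigma> \<otimes> \<one> H))"
  proof -
    have "(\<sigma> \<otimes> \<one> HH) \<cdot> (\<one> HH \<otimes> dr) = (\<one> HH \<otimes> dr) \<cdot> (\<sigma> \<otimes> \<one> H)"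
      using split_l[of \<sigma> dr] split_r[of \<sigma> dr] by simp
    from arg_cong[OF this, of "\<lambda>x. \<one> H \<otimes> x"] show ?thesis by simp
  qed
  also have "(\<one> H \<otimes> Q) \<cdot> (mg \<otimes> (mg \<otimes> \<one> H)) = mg \<otimes> (Q \<cdot> (mg \<otimes> \<one> H))"
    using interchange[of "\<one> H" mg Q "mg \<otimes> \<one> H"] by simp
  also have "(mg \<otimes> (Q \<cdot> (mg \<otimes> \<one> H))) \<cdot> (((\<one> HHH \<otimes> dr) \<cdot> (\<one> H \<otimes> (\<sigma> \<otimes> \<one> H))) \<cdot> (cupr \<otimes> dr))
     = ((mg \<otimes> (Q \<cdot> (mg \<otimes> \<one> H))) \<cdot> (\<one> HH \<otimes> (\<one> H \<otimes> dr))) \<cdot> ((\<one> H \<otimes> (\<sigma> \<otimes> \<one> H)) \<cdot> (cupr \<otimes> dr))"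
    by simp
  also have "(mg \<otimes> (Q \<cdot> (mg \<otimes> \<one> H))) \<cdot> (\<one> HH \<otimes> (\<one> H \<otimes> dr)) = mg \<otimes> ((Q \<cdot> (mg \<otimes> \<one> H)) \<cdot> (\<one> H \<otimes> dr))"
    using interchange[of mg "\<one> HH" "Q \<cdot> (mg \<otimes> \<one> H)" "\<one> H \<otimes> dr"] by simp
  also have "(Q \<cdot> (mg \<otimes> \<one> H)) \<cdot> (\<one> H \<otimes> dr) = ug \<otimes> ur"
  proof -
    have "(Q \<cdot> (mg \<otimes> \<one> H)) \<cdot> (\<one> H \<otimes> dr) = capg \<cdot> (((\<one> H \<otimes> s) \<cdot> (mg \<otimes> \<one> H)) \<cdot> (\<one> H \<otimes> dr))"
      by (simp add: Q_def)
    also have "(\<one> H \<otimes> s) \<cdot> (mg \<otimes> \<one> H) = (mg \<otimes> \<one> H) \<cdot> (\<one> HH \<otimes> s)"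
      using split_l[of mg s] split_r[of mg s] by simp
    also have "capg \<cdot> (((mg \<otimes> \<one> H) \<cdot> (\<one> HH \<otimes> s)) \<cdot> (\<one> H \<otimes> dr)) = ug \<cdot> ((mg \<cdot> (mg \<otimes> \<one> H)) \<cdot> ((\<one> HH \<otimes> s) \<cdot> (\<one> H \<otimes> dr)))"
      by (simp add: capg_def)
    also have "\<dots> = ug \<cdot> (mg \<cdot> (\<one> H \<otimes> (mg \<cdot> ((\<one> H \<otimes> s) \<cdot> dr))))"
      by (simp add: g_assoc)
    also have "\<dots> = ug \<cdot> ((mg \<cdot> (\<one> H \<otimes> eg)) \<cdot> (\<one> H \<otimes> ur))" by (simp add: h_antr)
    also have "\<dots> = ug \<cdot> (\<one> H \<otimes> ur)" by (simp add: g_unr)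
    also have "\<dots> = ug \<otimes> ur" using split_l[of ug ur] by simp
    finally show ?thesis .
  qed
  also have "mg \<otimes> (ug \<otimes> ur) = (mg \<otimes> ug) \<cdot> (\<one> HHH \<otimes> ur)"
    using split_l[of "mg \<otimes> ug" ur] by simp
  also have "((mg \<otimes> ug) \<cdot> (\<one> HHH \<otimes> ur)) \<cdot> ((\<one> H \<otimes> (\<sigma> \<otimes> \<one> H)) \<cdot> (cupr \<otimes> dr))
     = (mg \<otimes> ug) \<cdot> (((\<one> HHH \<otimes> ur) \<cdot> (\<one> H \<otimes> (\<sigma> \<otimes> \<one> H))) \<cdot> (cupr \<otimes> dr))" by simp
  also have "(\<one> HHH \<otimes> ur) \<cdot> (\<one> H \<otimes> (\<sigma> \<otimes> \<one> H)) = (\<one> H \<otimes> \<sigma>) \<cdot> (\<one> HHH \<otimes> ur)"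
  proof -
    have "(\<one> HH \<otimes> ur) \<cdot> (\<sigma> \<otimes> \<one> H) = \<sigma> \<cdot> (\<one> HH \<otimes> ur)"
      using split_l[of \<sigma> ur] split_r[of \<sigma> ur] by simp
    from arg_cong[OF this, of "\<lambda>x. \<one> H \<otimes> x"] show ?thesis by simp
  qed
  also have "((\<one> H \<otimes> \<sigma>) \<cdot> (\<one> HHH \<otimes> ur)) \<cdot> (cupr \<otimes> dr) = (\<one> H \<otimes> \<sigma>) \<cdot> ((\<one> HH \<otimes> (\<one> H \<otimes> ur)) \<cdot> (cupr \<otimes> dr))"
    by simp
  also have "(\<one> HH \<otimes> (\<one> H \<otimes> ur)) \<cdot> (cupr \<otimes> dr) = cupr \<otimes> ((\<one> H \<otimes> ur) \<cdot> dr)"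
    using interchange[of "\<one> HH" cupr "\<one> H \<otimes> ur" dr] by simp
  also have "\<dots> = cupr \<otimes> \<one> H" by (simp add: r_counr)
  also have "mg \<otimes> ug = mg \<cdot> (\<one> HH \<otimes> ug)" using split_l[of mg ug] by simp
  also have "(mg \<cdot> (\<one> HH \<otimes> ug)) \<cdot> ((\<one> H \<otimes> \<sigma>) \<cdot> (cupr \<otimes> \<one> H)) = mg \<cdot> ((\<one> H \<otimes> ((\<one> H \<otimes> ug) \<cdot> \<sigma>)) \<cdot> (cupr \<otimes> \<one> H))"
    by simp
  also have "(\<one> H \<otimes> ug) \<cdot> \<sigma> = ug \<otimes> \<one> H" unfolding \<sigma>_def by (rule sym_ug)
  also have "mg \<cdot> ((\<one> H \<otimes> (ug \<otimes> \<one> H)) \<cdot> (cupr \<otimes> \<one> H)) = mg \<cdot> (((\<one> H \<otimes> ug) \<cdot> cupr) \<otimes> \<one> H)"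
    by simp
  also have "(\<one> H \<otimes> ug) \<cdot> cupr = eg"
  proof -
    have "(\<one> H \<otimes> ug) \<cdot> cupr = ((\<one> H \<otimes> ug) \<cdot> dr) \<cdot> er" by (simp add: cupr_def)
    also have "\<dots> = eg \<cdot> (ug \<cdot> er)" by (simp add: B)
    also have "\<dots> = eg" by (simp add: C0)
    finally show ?thesis .
  qed
  also have "mg \<cdot> (eg \<otimes> \<one> H) = \<one> H" by (rule g_unl)
  finally show ?thesis by (simp add: Q_def)
qed

lemma capr_eq: "capr = capg \<cdot> (\<one> H \<otimes> s)"
proof -
  define Q where "Q = capg \<cdot> (\<one> H \<otimes> s)"
  have tyQ[simp]: "dd Q = HH" "co Q = II" unfolding Q_def by simp_all
  have P': "(\<one> H \<otimes> Q) \<cdot> (cupr \<otimes> \<one> H) = \<one> H" using P unfolding Q_def .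
  have "capr = capr \<cdot> (\<one> H \<otimes> ((\<one> H \<otimes> Q) \<cdot> (cupr \<otimes> \<one> H)))" using P' by simp
  also have "\<dots> = (capr \<cdot> (\<one> HH \<otimes> Q)) \<cdot> (\<one> H \<otimes> (cupr \<otimes> \<one> H))" by simp
  also have "capr \<cdot> (\<one> HH \<otimes> Q) = Q \<cdot> (capr \<otimes> \<one> HH)"
    using scal_comm[of capr Q] by simp
  also have "(Q \<cdot> (capr \<otimes> \<one> HH)) \<cdot> (\<one> H \<otimes> (cupr \<otimes> \<one> H)) = Q \<cdot> (((capr \<otimes> \<one> H) \<cdot> (\<one> H \<otimes> cupr)) \<otimes> (\<one> H \<cdot> \<one> H))"
    using interchange[of "capr \<otimes> \<one> H" "\<one> H \<otimes> cupr" "\<one> H" "\<one> H"] by simp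
  also have "\<dots> = Q" by (simp add: snake_r2)
  finally show ?thesis unfolding Q_def .
qed

lemma s_eq: "s = (\<one> H \<otimes> capr) \<cdot> (cupg \<otimes> \<one> H)"
proof -
  have "(\<one> H \<otimes> capr) \<cdot> (cupg \<otimes> \<one> H) = (\<one> H \<otimes> capg) \<cdot> ((\<one> HH \<otimes> s) \<cdot> (cupg \<otimes> \<one> H))"
    by (simp add: capr_eq)
  also have "(\<one> HH \<otimes> s) \<cdot> (cupg \<otimes> \<one> H) = (cupg \<otimes> \<one> H) \<cdot> s"
    using split_l[of cupg s] split_r[of cupg s] by simp
  also have "(\<one> H \<otimes> capg) \<cdot> ((cupg \<otimes> \<one> H) \<cdot> s) = s"
    using chain1[OF snake_g1, of s] by simp
  finally show ?thesis ..
qed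

end

end

theorem mainTheorem4:
  fixes C :: "('o, 'm) smcat" and H :: 'o
    and mu_g eta_g delta_g eps_g mu_r eta_r delta_r eps_r s :: 'm
  assumes "strict_symmetric_monoidal_cat C"
    and "pre_hopf_frobenius C H mu_g eta_g delta_g eps_g mu_r eta_r delta_r eps_r s"
  shows "integral_hopf C H mu_g eta_g delta_r eps_r s eta_r eps_g \<longleftrightarrow>
         s = mcomp C (mtens C (mid C H) (mcomp C eps_r mu_r))
                     (mtens C (mcomp C delta_g eta_g) (mid C H))"
proof -
  interpret phf C H mu_g eta_g delta_g eps_g mu_r eta_r delta_r eps_r s
    using assms by (simp add: phf_def ssmc_def phf_axioms_def)
  have "integral_hopf C H mu_g eta_g delta_r eps_r s eta_r eps_g \<longleftrightarrow>
     (mu_g \<cdot> (eta_r \<otimes> \<one> H) = eta_r \<cdot> eps_r \<and> (\<one> H \<otimes> eps_g) \<cdot> delta_r = eta_g \<cdot> eps_g \<and> eps_g \<cdot> eta_r = \<one> II)"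
    using Hp by (auto simp: integral_hopf_def is_left_cointegral_def is_right_integral_def hom_def)
  also have "\<dots> \<longleftrightarrow> s = (\<one> H \<otimes> capr) \<cdot> (cupg \<otimes> \<one> H)"
    using Aa Bb Cc s_eq by blast
  finally show ?thesis by (simp add: capr_def cupg_def)
qed

end
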